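(* Let $X$ be a real Banach space and let $Y,Z$ be closed subspaces of $X$ with $Z\subseteq Y\subseteq X$. If $Z$ is a semi $M$-ideal in $X$ and $Y/Z$ has property-$(wU)$ in $X/Z$, then $Y$ has property-$(wU)$ in $X$.
   Context: $Y$ has property-$(wU)$ in $X$ if every $y^*\in Y^*$ that attains its norm on the unit sphere $S_Y$ (i.e. $\|y^*\|=y^*(y_0)$ for some $y_0\in S_Y$) has a unique extension $x^*\in X^*$ with $x^*|_Y=y^*$ and $\|x^*\|=\|y^*\|$. A closed subspace $J$ of $X$ is a semi $M$-ideal if $X^*=J^\perp\oplus_{\ell_1}W$ for some closed subset $W\subseteq X^*$, i.e. every $x^*\in X^*$ decomposes uniquely as $x^*=u+w$ with $u\in J^\perp$, $w\in W$, and $\|x^*\|=\|u\|+\|w\|$ (equivalently, $J$ has the $2$-ball property in $X$); here $J^\perp=\{x^*\in X^*:x^*|_J=0\}$. $Y/Z$ is regarded as a subspace of $X/Z$ with the quotient norm. *)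

theory Defs
  imports "HOL-Analysis.Analysis"
begin

text \<open>Bounded linear functionals on a subspace S of the ambient normed space
  (represented as real-valued functions; only their values on S matter).\<close>
definition sub_dual :: "'a::real_normed_vector set \<Rightarrow> ('a \<Rightarrow> real) \<Rightarrow> bool" where
  "sub_dual S g \<longleftrightarrow>
     (\<forall>x\<in>S. \<forall>y\<in>S. g (x + y) = g x + g y) \<and>
     (\<forall>c. \<forall>x\<in>S. g (c *\<^sub>R x) = c * g x) \<and>
     (\<exists>K. \<forall>x\<in>S. \<bar>g x\<bar> \<le> K * norm x)"

definition dual_norm_on :: "'a::real_normed_vector set \<Rightarrow> ('a \<Rightarrow> real) \<Rightarrow> real" where
  "dual_norm_on S g = (SUP x\<in>{x\<in>S. norm x \<le> 1}. \<bar>g x\<bar>)"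

definition property_wU :: "'a::real_normed_vector set \<Rightarrow> bool" where
  "property_wU Y \<longleftrightarrow>
     (\<forall>g. sub_dual Y g \<and> (\<exists>y0\<in>Y. norm y0 = 1 \<and> g y0 = dual_norm_on Y g) \<longrightarrow>
        (\<exists>!x::'a \<Rightarrow>\<^sub>L real. (\<forall>y\<in>Y. blinfun_apply x y = g y) \<and> norm x = dual_norm_on Y g))"

definition annihilator :: "'a::real_normed_vector set \<Rightarrow> ('a \<Rightarrow>\<^sub>L real) set" where
  "annihilator J = {f. \<forall>z\<in>J. blinfun_apply f z = 0}"

text \<open>Semi M-ideal: X* = J^perp (+)_l1 W for some closed subset W of X*.\<close>
definition semi_M_ideal :: "'a::real_normed_vector set \<Rightarrow> bool" where
  "semi_M_ideal J \<longleftrightarrow>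
     (\<exists>W :: ('a \<Rightarrow>\<^sub>L real) set. closed W \<and>
        (\<forall>f. \<exists>!p. fst p \<in> annihilator J \<and> snd p \<in> W \<and> f = fst p + snd p) \<and>
        (\<forall>u\<in>annihilator J. \<forall>w\<in>W. norm (u + w) = norm u + norm w))"

definition realises_quotient :: "'a::real_normed_vector set \<Rightarrow> ('a \<Rightarrow> 'b::real_normed_vector) \<Rightarrow> bool" where
  "realises_quotient Z q \<longleftrightarrow> linear q \<and> surj q \<and> (\<forall>x. q x = 0 \<longleftrightarrow> x \<in> Z) \<and>
     (\<forall>x. norm (q x) = infdist x Z)"

end

theory Submission imports Defs begin
lemma graph_unique:
  fixes M :: "('a::real_normed_vector \<times> real) set"
  assumes "subspace M" "\<forall>p\<in>M. snd p \<le> N * norm (fst p)" "(x,a) \<in> M" "(x,b) \<in> M"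
  shows "a = b"
proof -
  have "(x,a) - (x,b) \<in> M" "(x,b) - (x,a) \<in> M" using assms subspace_diff by blast+
  then have "a - b \<le> 0" "b - a \<le> 0" using assms(2) by force+
  then show ?thesis by simp
qed

lemma HB_ext:
  fixes Y :: "'a::real_normed_vector set" and g :: "'a \<Rightarrow> real"
  assumes Ysub: "subspace Y"
    and gadd: "\<forall>x\<in>Y. \<forall>y\<in>Y. g (x + y) = g x + g y"
    and gmul: "\<forall>c. \<forall>x\<in>Y. g (c *\<^sub>R x) = c * g x"
    and gbd: "\<forall>y\<in>Y. \<bar>g y\<bar> \<le> N * norm y" and N0: "0 \<le> N"
  shows "\<exists>f::'a \<Rightarrow>\<^sub>L real. (\<forall>y\<in>Y. blinfun_apply f y = g y) \<and> norm f \<le> N"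
proof -
  define A where "A = {G :: ('a \<times> real) set. subspace G \<and> (\<forall>p\<in>G. snd p \<le> N * norm (fst p))
      \<and> (\<forall>y\<in>Y. (y, g y) \<in> G)}"
  define G0 where "G0 = (\<lambda>y. (y, g y)) ` Y"
  have g0: "g 0 = 0" using gmul Ysub subspace_0[OF Ysub] by (metis mult_zero_left scaleR_zero_left)
  have "subspace G0"
    unfolding subspace_def G0_def
  proof (intro conjI ballI allI)
    show "0 \<in> (\<lambda>y. (y, g y)) ` Y"
      by (rule image_eqI[of _ _ 0]) (simp_all add: g0 zero_prod_def subspace_0[OF Ysub])
  next
    fix p q assume "p \<in> (\<lambda>y. (y, g y)) ` Y" "q \<in> (\<lambda>y. (y, g y)) ` Y"
    then obtain x y where "x \<in> Y" "y \<in> Y" "p = (x, g x)" "q = (y, g y)" by auto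
    then have "p + q = (x + y, g (x + y))" using gadd by simp
    then show "p + q \<in> (\<lambda>y. (y, g y)) ` Y"
      by (rule image_eqI) (use \<open>x \<in> Y\<close> \<open>y \<in> Y\<close> Ysub subspace_add in blast)
  next
    fix c :: real and p assume "p \<in> (\<lambda>y. (y, g y)) ` Y"
    then obtain x where "x \<in> Y" "p = (x, g x)" by auto
    then have "c *\<^sub>R p = (c *\<^sub>R x, g (c *\<^sub>R x))" using gmul by simp
    then show "c *\<^sub>R p \<in> (\<lambda>y. (y, g y)) ` Y"
      by (rule image_eqI) (use \<open>x \<in> Y\<close> Ysub subspace_mul in blast)
  qed
  then have G0A: "G0 \<in> A" unfolding A_def G0_def using gbd by force
  have "\<forall>C\<in>chains A. \<exists>U\<in>A. \<forall>X\<in>C. X \<subseteq> U"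
  proof
    fix C assume C: "C \<in> chains A"
    show "\<exists>U\<in>A. \<forall>X\<in>C. X \<subseteq> U"
    proof (cases "C = {}")
      case True then show ?thesis using G0A by auto
    next
      case False
      have CA: "C \<subseteq> A" and ch: "\<forall>X\<in>C. \<forall>Y\<in>C. X \<subseteq> Y \<or> Y \<subseteq> X"
        using C unfolding chains_def chain_subset_def by auto
      have "subspace (\<Union>C)"
        unfolding subspace_def
      proof (intro conjI ballI allI)
        obtain X where "X \<in> C" using False by auto
        then show "0 \<in> \<Union>C" using CA unfolding A_def subspace_def by auto
      next
        fix p q assume "p \<in> \<Union>C" "q \<in> \<Union>C"
        then obtain X1 X2 where X: "X1 \<in> C" "X2 \<in> C" "p \<in> X1" "q \<in> X2" by auto
        show "p + q \<in> \<Union>C"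
        proof (cases "X1 \<subseteq> X2")
          case True
          then show ?thesis using X CA unfolding A_def subspace_def by blast
        next
          case False
          then have "X2 \<subseteq> X1" using ch X by blast
          then show ?thesis using X CA unfolding A_def subspace_def by blast
        qed
      next
        fix c :: real and p assume "p \<in> \<Union>C"
        then obtain X where "X \<in> C" "p \<in> X" by auto
        then show "c *\<^sub>R p \<in> \<Union>C" using CA unfolding A_def subspace_def by blast
      qed
      moreover have "\<forall>p\<in>\<Union>C. snd p \<le> N * norm (fst p)" using CA unfolding A_def by blast
      moreover have "\<forall>y\<in>Y. (y, g y) \<in> \<Union>C"
        using CA False unfolding A_def by blast
      ultimately have "\<Union>C \<in> A" unfolding A_def by blast
      then show ?thesis by blast
    qed
  qed
  from Zorn_Lemma2[OF this] obtain M where MA: "M \<in> A" and Mmax: "\<forall>X\<in>A. M \<subseteq> X \<longrightarrow> X = M"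
    by blast
  have Msub: "subspace M" and Mdom: "\<forall>p\<in>M. snd p \<le> N * norm (fst p)"
    and Mg: "\<forall>y\<in>Y. (y, g y) \<in> M" using MA unfolding A_def by auto
  have Mall: "\<exists>a. (x, a) \<in> M" for x
  proof (rule ccontr)
    assume nx: "\<not> (\<exists>a. (x, a) \<in> M)"
    define S where "S = (\<lambda>p. snd p - N * norm (fst p - x)) ` M"
    define c where "c = Sup S"
    have key: "a - N * norm (d - x) \<le> N * norm (e + x) - b" if "(d,a) \<in> M" "(e,b) \<in> M" for d a e b
    proof -
      have "(d,a) + (e,b) \<in> M" using that Msub subspace_add by blast
      then have "a + b \<le> N * norm (d + e)" using Mdom by force
      also have "norm (d + e) \<le> norm (d - x) + norm (e + x)"
        using norm_triangle_ineq[of "d - x" "e + x"] by simp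
      finally show ?thesis using N0 by (smt (verit, best) mult_left_mono distrib_left)
    qed
    have Sne: "S \<noteq> {}" using Msub subspace_0 unfolding S_def by blast
    have Sbdd: "bdd_above S"
      unfolding bdd_above_def S_def
    proof (intro exI ballI)
      fix s assume "s \<in> (\<lambda>p. snd p - N * norm (fst p - x)) ` M"
      then obtain d a where "(d,a) \<in> M" "s = a - N * norm (d - x)" by auto
      moreover have "(0, 0) \<in> M" using Msub subspace_0 by (metis zero_prod_def)
      ultimately show "s \<le> N * norm (0 + x) - 0" using key by blast
    qed
    have cup: "a - N * norm (d - x) \<le> c" if "(d,a) \<in> M" for d a
      unfolding c_def using Sbdd that by (intro cSup_upper) (auto simp: S_def image_iff intro!: bexI[of _ "(d,a)"])
    have clo: "c \<le> N * norm (e + x) - b" if "(e,b) \<in> M" for e b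
      unfolding c_def using Sne
    proof (intro cSup_least)
      fix s assume "s \<in> S"
      then obtain d a where "(d,a) \<in> M" "s = a - N * norm (d - x)" unfolding S_def by auto
      then show "s \<le> N * norm (e + x) - b" using key that by blast
    qed auto
    define M' where "M' = {(d + t *\<^sub>R x, a + t * c) | d a t. (d,a) \<in> M}"
    have "subspace M'"
      unfolding subspace_def
    proof (intro conjI ballI allI)
      have "(0, 0) \<in> M" using Msub subspace_0 by (metis zero_prod_def)
      then show "0 \<in> M'" unfolding M'_def zero_prod_def
        by (rule_tac CollectI, rule_tac exI[of _ 0], rule_tac exI[of _ 0], rule_tac exI[of _ 0]) simp
    next
      fix p q assume "p \<in> M'" "q \<in> M'"
      then obtain d1 a1 t1 d2 a2 t2 where P: "(d1,a1) \<in> M" "(d2,a2) \<in> M"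
        "p = (d1 + t1 *\<^sub>R x, a1 + t1 * c)" "q = (d2 + t2 *\<^sub>R x, a2 + t2 * c)"
        unfolding M'_def by blast
      have "(d1,a1) + (d2,a2) \<in> M" using P Msub subspace_add by blast
      then have "(d1 + d2, a1 + a2) \<in> M" by simp
      moreover have "p + q = (d1 + d2 + (t1 + t2) *\<^sub>R x, a1 + a2 + (t1 + t2) * c)"
        using P by (simp add: algebra_simps)
      ultimately show "p + q \<in> M'" unfolding M'_def by blast
    next
      fix s :: real and p assume "p \<in> M'"
      then obtain d a t where P: "(d,a) \<in> M" "p = (d + t *\<^sub>R x, a + t * c)"
        unfolding M'_def by auto
      have "s *\<^sub>R (d,a) \<in> M" using P Msub subspace_mul by blast
      then have "(s *\<^sub>R d, s * a) \<in> M" by simp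
      moreover have "s *\<^sub>R p = (s *\<^sub>R d + (s * t) *\<^sub>R x, s * a + (s * t) * c)"
        using P by (simp add: algebra_simps)
      ultimately show "s *\<^sub>R p \<in> M'" unfolding M'_def by blast
    qed
    moreover have "\<forall>p\<in>M'. snd p \<le> N * norm (fst p)"
    proof
      fix p assume "p \<in> M'"
      then obtain d a t where P: "(d,a) \<in> M" "p = (d + t *\<^sub>R x, a + t * c)"
        unfolding M'_def by auto
      have "a + t * c \<le> N * norm (d + t *\<^sub>R x)"
      proof (cases "t = 0")
        case True then show ?thesis using P Mdom by force
      next
        case tne: False
        have sc: "(inverse t) *\<^sub>R (d,a) \<in> M" using P Msub subspace_mul by blast
        then have sc': "(inverse t *\<^sub>R d, inverse t * a) \<in> M" by simp
        show ?thesis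
        proof (cases "t > 0")
          case True
          have "c \<le> N * norm (inverse t *\<^sub>R d + x) - inverse t * a" using clo sc' by blast
          then have "t * c \<le> t * (N * norm (inverse t *\<^sub>R d + x) - inverse t * a)"
            using True by (simp add: mult_left_mono)
          also have "\<dots> = N * (t * norm (inverse t *\<^sub>R d + x)) - a" using tne by (simp add: algebra_simps)
          also have "t * norm (inverse t *\<^sub>R d + x) = norm (t *\<^sub>R (inverse t *\<^sub>R d + x))"
            using True by simp
          also have "t *\<^sub>R (inverse t *\<^sub>R d + x) = d + t *\<^sub>R x" using tne by (simp add: algebra_simps)
          finally show ?thesis by simp
        next
          case False
          then have tn: "t < 0" using tne by simp
          define s where "s = - t"
          have s0: "s > 0" using tn s_def by simp
          have sc2: "(inverse s) *\<^sub>R (d,a) \<in> M" using P Msub subspace_mul by blast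
          then have sc2': "(inverse s *\<^sub>R d, inverse s * a) \<in> M" by simp
          have "inverse s * a - N * norm (inverse s *\<^sub>R d - x) \<le> c" using cup sc2' by blast
          then have e1: "s * (inverse s * a - N * norm (inverse s *\<^sub>R d - x)) \<le> s * c"
            using s0 by (simp add: mult_left_mono)
          have e2: "s * (inverse s * a - N * norm (inverse s *\<^sub>R d - x))
              = a - N * (s * norm (inverse s *\<^sub>R d - x))" using s0 by (simp add: algebra_simps)
          have e3: "s * norm (inverse s *\<^sub>R d - x) = norm (s *\<^sub>R (inverse s *\<^sub>R d - x))"
            using s0 by simp
          have e4: "s *\<^sub>R (inverse s *\<^sub>R d - x) = d + t *\<^sub>R x" using s0 s_def by (simp add: algebra_simps)
          from e1 have "a - N * norm (d + t *\<^sub>R x) \<le> s * c" unfolding e2 e3 e4 .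
          then show ?thesis using s_def by simp
        qed
      qed
      then show "snd p \<le> N * norm (fst p)" using P by simp
    qed
    moreover have MM': "M \<subseteq> M'"
    proof
      fix p assume "p \<in> M"
      then obtain d a where "p = (d,a)" "(d,a) \<in> M" by (cases p) auto
      then show "p \<in> M'" unfolding M'_def
        by (rule_tac CollectI, rule_tac exI[of _ d], rule_tac exI[of _ a], rule_tac exI[of _ 0]) simp
    qed
    ultimately have "M' \<in> A" using Mg unfolding A_def by blast
    then have "M' = M" using Mmax MM' by blast
    moreover have "(x, c) \<in> M'"
    proof -
      have "(0, 0) \<in> M" using Msub subspace_0 by (metis zero_prod_def)
      then show ?thesis unfolding M'_def
        by (rule_tac CollectI, rule_tac exI[of _ 0], rule_tac exI[of _ 0], rule_tac exI[of _ 1]) simp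
    qed
    ultimately show False using nx by blast
  qed
  define f where "f x = (SOME a. (x, a) \<in> M)" for x
  have fM: "(x, f x) \<in> M" for x unfolding f_def using Mall by (metis someI_ex)
  have fU: "(x, a) \<in> M \<Longrightarrow> a = f x" for x a using graph_unique[OF Msub Mdom] fM by blast
  have fadd: "f (x + y) = f x + f y" for x y
  proof -
    have "(x, f x) + (y, f y) \<in> M" using fM Msub subspace_add by blast
    then show ?thesis using fU by simp
  qed
  have fmul: "f (r *\<^sub>R x) = r *\<^sub>R f x" for r x
  proof -
    have "r *\<^sub>R (x, f x) \<in> M" using fM Msub subspace_mul by blast
    then show ?thesis using fU by simp
  qed
  have fbd: "norm (f x) \<le> N * norm x" for x
  proof -
    have "f x \<le> N * norm x" using fM Mdom by force
    moreover have "f (-x) \<le> N * norm (-x)" using fM[of "-x"] Mdom by fastforce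
    moreover have "f (-x) = - f x" using fmul[of "-1" x] by simp
    ultimately show ?thesis by simp
  qed
  have bl: "bounded_linear f"
    by (rule bounded_linear_intro[of _ N]) (use fadd fmul fbd in \<open>auto simp: mult.commute\<close>)
  have "norm (Blinfun f) \<le> N"
    using N0 fbd by (intro norm_blinfun_bound) (auto simp: bounded_linear_Blinfun_apply[OF bl])
  moreover have "\<forall>y\<in>Y. f y = g y" using fU Mg by metis
  then have "\<forall>y\<in>Y. blinfun_apply (Blinfun f) y = g y"
    by (simp add: bounded_linear_Blinfun_apply[OF bl])
  ultimately show ?thesis by blast
qed

lemma dn_bdd:
  assumes "sub_dual S g"
  shows "bdd_above ((\<lambda>x. \<bar>g x\<bar>) ` {x\<in>S. norm x \<le> 1})"
proof -
  obtain K where K: "\<forall>x\<in>S. \<bar>g x\<bar> \<le> K * norm x" using assms unfolding sub_dual_def by blast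
  have "\<bar>g x\<bar> \<le> \<bar>K\<bar>" if "x \<in> S" "norm x \<le> 1" for x
  proof -
    have "\<bar>g x\<bar> \<le> K * norm x" using K that by blast
    also have "\<dots> \<le> \<bar>K\<bar> * norm x" by (simp add: mult_right_mono)
    also have "\<dots> \<le> \<bar>K\<bar>" using that by (simp add: mult_left_le)
    finally show ?thesis .
  qed
  then show ?thesis unfolding bdd_above_def by blast
qed

lemma dn_ge:
  assumes "sub_dual S g" "y \<in> S" "norm y \<le> 1"
  shows "\<bar>g y\<bar> \<le> dual_norm_on S g"
  unfolding dual_norm_on_def using assms dn_bdd[OF assms(1)] by (intro cSUP_upper) auto

lemma dn_bound:
  assumes "sub_dual S g" "subspace S" "y \<in> S"
  shows "\<bar>g y\<bar> \<le> dual_norm_on S g * norm y"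
proof (cases "y = 0")
  case True
  have "g 0 = 0" using assms(1) subspace_0[OF assms(2)] unfolding sub_dual_def
    by (metis mult_zero_left scaleR_zero_left)
  then show ?thesis using True by simp
next
  case False
  have m: "g (inverse (norm y) *\<^sub>R y) = inverse (norm y) * g y"
    using assms unfolding sub_dual_def by blast
  have "inverse (norm y) *\<^sub>R y \<in> S" using assms subspace_mul by blast
  moreover have "norm (inverse (norm y) *\<^sub>R y) \<le> 1" using False by simp
  ultimately have "\<bar>inverse (norm y) * g y\<bar> \<le> dual_norm_on S g" using dn_ge[OF assms(1)] m by metis
  then have "\<bar>g y\<bar> / norm y \<le> dual_norm_on S g" using False by (simp add: abs_mult divide_inverse mult.commute)
  then show ?thesis using False by (simp add: divide_le_eq)
qed

lemma dn_nonneg: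
  assumes "sub_dual S g" "subspace S"
  shows "0 \<le> dual_norm_on S g"
  using dn_ge[OF assms(1) subspace_0[OF assms(2)]] abs_ge_zero[of "g 0"] by simp

lemma dn_le:
  assumes "subspace S" "\<forall>y\<in>S. \<bar>g y\<bar> \<le> M * norm y" "0 \<le> M"
  shows "dual_norm_on S g \<le> M"
  unfolding dual_norm_on_def
proof (rule cSUP_least)
  show "{x \<in> S. norm x \<le> 1} \<noteq> {}" using subspace_0[OF assms(1)] by force
next
  fix x assume "x \<in> {x \<in> S. norm x \<le> 1}"
  then have "\<bar>g x\<bar> \<le> M * norm x" "norm x \<le> 1" using assms by auto
  then show "\<bar>g x\<bar> \<le> M" using assms(3) by (meson mult_left_le order_trans)
qed

lemma quot_fun:
  fixes Z :: "'a::real_normed_vector set" and q :: "'a \<Rightarrow> 'b::real_normed_vector"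
  assumes rq: "realises_quotient Z q" and Zs: "subspace Z" and u: "u \<in> annihilator Z"
  shows "\<exists>v::'b \<Rightarrow>\<^sub>L real. (\<forall>x. blinfun_apply v (q x) = blinfun_apply u x) \<and> norm v = norm u"
proof -
  have lin: "linear q" and sq: "surj q" and ker: "\<forall>x. q x = 0 \<longleftrightarrow> x \<in> Z"
    and nq: "\<forall>x. norm (q x) = infdist x Z" using rq unfolding realises_quotient_def by auto
  have uz: "\<forall>z\<in>Z. blinfun_apply u z = 0" using u unfolding annihilator_def by auto
  have wd: "blinfun_apply u x = blinfun_apply u x'" if "q x = q x'" for x x'
  proof -
    have "q (x - x') = 0" using that lin by (simp add: linear_diff)
    then have "x - x' \<in> Z" using ker by blast
    then have "blinfun_apply u (x - x') = 0" using uz by blast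
    then show ?thesis by (simp add: blinfun.diff_right)
  qed
  define r where "r b = (SOME x. q x = b)" for b
  have qr: "q (r b) = b" for b unfolding r_def using sq by (metis (mono_tags) someI_ex surjD)
  define v where "v b = blinfun_apply u (r b)" for b
  have vq: "v (q x) = blinfun_apply u x" for x unfolding v_def using wd qr by metis
  have bnd: "\<bar>blinfun_apply u x\<bar> \<le> norm u * infdist x Z" for x
  proof (cases "norm u = 0")
    case True then show ?thesis by simp
  next
    case False
    then have nu: "norm u > 0" by simp
    have "\<bar>blinfun_apply u x\<bar> / norm u \<le> infdist x Z"
      unfolding infdist_def
    proof -
      have "Z \<noteq> {}" using subspace_0[OF Zs] by blast
      moreover have "\<bar>blinfun_apply u x\<bar> / norm u \<le> dist x z" if "z \<in> Z" for z
      proof -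
        have "\<bar>blinfun_apply u x\<bar> = \<bar>blinfun_apply u (x - z)\<bar>"
          using uz that by (simp add: blinfun.diff_right)
        also have "\<dots> \<le> norm u * norm (x - z)" using norm_blinfun[of u "x - z"] by simp
        finally show ?thesis using nu by (simp add: dist_norm divide_le_eq mult.commute)
      qed
      ultimately show "\<bar>blinfun_apply u x\<bar> / norm u \<le> (if Z = {} then 0 else INF a\<in>Z. dist x a)"
        by (simp add: cINF_greatest)
    qed
    then show ?thesis using nu by (simp add: divide_le_eq mult.commute)
  qed
  have vadd: "v (a + b) = v a + v b" for a b
  proof -
    have "q (r a + r b) = a + b" using lin qr by (simp add: linear_add)
    then have "v (a + b) = v (q (r a + r b))" by simp
    also have "\<dots> = blinfun_apply u (r a + r b)" by (rule vq)
    finally show ?thesis unfolding v_def by (simp add: blinfun.add_right)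
  qed
  have vmul: "v (c *\<^sub>R a) = c *\<^sub>R v a" for c a
  proof -
    have "q (c *\<^sub>R r a) = c *\<^sub>R a" using lin qr by (simp add: linear_scale)
    then have "v (c *\<^sub>R a) = v (q (c *\<^sub>R r a))" by simp
    also have "\<dots> = blinfun_apply u (c *\<^sub>R r a)" by (rule vq)
    finally show ?thesis unfolding v_def by (simp add: blinfun.scaleR_right)
  qed
  have vbd: "norm (v b) \<le> norm u * norm b" for b
    using bnd[of "r b"] nq qr unfolding v_def by (metis real_norm_def)
  have bl: "bounded_linear v"
    by (rule bounded_linear_intro[of _ "norm u"]) (use vadd vmul vbd in \<open>auto simp: mult.commute\<close>)
  define V where "V = Blinfun v"
  have Vap: "blinfun_apply V = v" unfolding V_def using bl by (simp add: bounded_linear_Blinfun_apply)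
  have le1: "norm V \<le> norm u" using vbd by (intro norm_blinfun_bound) (auto simp: Vap)
  have le2: "norm u \<le> norm V"
  proof (rule norm_blinfun_bound)
    fix x
    have "norm (blinfun_apply u x) = norm (v (q x))" using vq by simp
    also have "\<dots> \<le> norm V * norm (q x)" using norm_blinfun[of V "q x"] by (simp add: Vap)
    also have "norm (q x) \<le> norm x"
      using nq infdist_le[OF subspace_0[OF Zs], of x] by simp
    then have "norm V * norm (q x) \<le> norm V * norm x" by (simp add: mult_left_mono)
    finally show "norm (blinfun_apply u x) \<le> norm V * norm x" .
  qed simp
  show ?thesis using le1 le2 vq Vap by (intro exI[of _ V]) auto
qed

theorem theorem2p2:
  fixes Y Z :: "'a::banach set" and q :: "'a \<Rightarrow> 'b::real_normed_vector"
  assumes "subspace Y" "closed Y" "subspace Z" "closed Z" "Z \<subseteq> Y"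
    and "realises_quotient Z q"
    and "semi_M_ideal Z"
    and "property_wU (q ` Y)"
  shows "property_wU Y"
  unfolding property_wU_def
proof (intro allI impI)
  fix g assume H: "sub_dual Y g \<and> (\<exists>y0\<in>Y. norm y0 = 1 \<and> g y0 = dual_norm_on Y g)"
  then have sd: "sub_dual Y g" by blast
  from H obtain y0 where y0: "y0 \<in> Y" "norm y0 = 1" "g y0 = dual_norm_on Y g" by blast
  define N where "N = dual_norm_on Y g"
  have N0: "0 \<le> N" unfolding N_def using dn_nonneg[OF sd assms(1)] .
  have ext: "\<exists>f::'a \<Rightarrow>\<^sub>L real. (\<forall>y\<in>Y. blinfun_apply f y = g y) \<and> norm f \<le> N"
    using sd dn_bound[OF sd assms(1)] N0 unfolding sub_dual_def N_def
    by (intro HB_ext[OF assms(1)]) auto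
  have normge: "N \<le> norm f" if "\<forall>y\<in>Y. blinfun_apply f y = g y" for f :: "'a \<Rightarrow>\<^sub>L real"
    unfolding N_def
  proof (rule dn_le[OF assms(1)])
    show "\<forall>y\<in>Y. \<bar>g y\<bar> \<le> norm f * norm y" using that norm_blinfun[of f] by (metis real_norm_def)
  qed simp
  have uniq: "f1 = f2" if f1: "\<forall>y\<in>Y. blinfun_apply f1 y = g y" "norm f1 = N"
    and f2: "\<forall>y\<in>Y. blinfun_apply f2 y = g y" "norm f2 = N" for f1 f2 :: "'a \<Rightarrow>\<^sub>L real"
  proof -
    obtain W :: "('a \<Rightarrow>\<^sub>L real) set" where
      dec: "\<forall>f. \<exists>!p. fst p \<in> annihilator Z \<and> snd p \<in> W \<and> f = fst p + snd p"
      and nadd: "\<forall>u\<in>annihilator Z. \<forall>w\<in>W. norm (u + w) = norm u + norm w"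
      using assms(7) unfolding semi_M_ideal_def by blast
    obtain p1 where p1: "fst p1 \<in> annihilator Z" "snd p1 \<in> W" "f1 = fst p1 + snd p1" using dec by blast
    obtain p2 where p2: "fst p2 \<in> annihilator Z" "snd p2 \<in> W" "f2 = fst p2 + snd p2" using dec by blast
    define u1 where "u1 = fst p1"
    define w where "w = snd p1"
    have ann_sub: "a - b \<in> annihilator Z" if "\<forall>y\<in>Y. blinfun_apply a y = g y" "\<forall>y\<in>Y. blinfun_apply b y = g y" for a b
      using that assms(5) unfolding annihilator_def by (auto simp: blinfun.diff_left)
    have ann_add: "a + b \<in> annihilator Z" if "a \<in> annihilator Z" "b \<in> annihilator Z" for a b
      using that unfolding annihilator_def by (auto simp: blinfun.add_left)
    have "(f2 - f1 + u1) \<in> annihilator Z" using ann_add[OF ann_sub[OF f2(1) f1(1)]] p1 u1_def by blast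
    moreover have "f2 = (f2 - f1 + u1) + w" using p1 u1_def w_def by simp
    ultimately have "p2 = (f2 - f1 + u1, w)" using dec p2 p1 w_def
      by (metis fst_conv snd_conv)
    then have p2': "f2 = (f2 - f1 + u1) + w" "snd p2 = w" by (auto simp: p1 u1_def w_def)
    define u2 where "u2 = fst p2"
    have u2eq: "f2 = u2 + w" using p2 p2' u2_def by simp
    have f1eq: "f1 = u1 + w" using p1 u1_def w_def by simp
    have u1A: "u1 \<in> annihilator Z" and u2A: "u2 \<in> annihilator Z" and wW: "w \<in> W"
      using p1 p2 u1_def u2_def w_def by auto
    have n1: "norm u1 = N - norm w" using nadd u1A wW f1eq f1(2) by force
    have n2: "norm u2 = N - norm w" using nadd u2A wW u2eq f2(2) by force
    define c where "c = N - norm w"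
    have c0: "0 \<le> c" using n1 c_def by (metis norm_ge_zero)
    show "f1 = f2"
    proof (cases "c = 0")
      case True
      then have "u1 = 0" "u2 = 0" using n1 n2 c_def by auto
      then show ?thesis using f1eq u2eq by simp
    next
      case False
      then have cpos: "c > 0" using c0 by simp
      obtain v1 :: "'b \<Rightarrow>\<^sub>L real" where v1: "\<forall>x. blinfun_apply v1 (q x) = blinfun_apply u1 x" "norm v1 = norm u1"
        using quot_fun[OF assms(6) assms(3) u1A] by blast
      obtain v2 :: "'b \<Rightarrow>\<^sub>L real" where v2: "\<forall>x. blinfun_apply v2 (q x) = blinfun_apply u2 x" "norm v2 = norm u2"
        using quot_fun[OF assms(6) assms(3) u2A] by blast
      have uY1: "blinfun_apply u1 y = g y - blinfun_apply w y" if "y \<in> Y" for y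
        using f1(1) that f1eq by (metis add_diff_cancel_right' blinfun.add_left)
      have uY2: "blinfun_apply u2 y = g y - blinfun_apply w y" if "y \<in> Y" for y
        using f2(1) that u2eq by (metis add_diff_cancel_right' blinfun.add_left)
      define \<phi> where "\<phi> = blinfun_apply v1"
      have agree: "\<forall>b\<in>q ` Y. blinfun_apply v2 b = \<phi> b" using uY1 uY2 v1 v2 \<phi>_def by auto
      have nqy: "norm (q y0) \<le> 1"
        using assms(6) infdist_le[OF subspace_0[OF assms(3)], of y0] y0(2)
        unfolding realises_quotient_def by simp
      have wy0: "blinfun_apply w y0 \<le> norm w"
        using norm_blinfun[of w y0] y0(2) by simp
      have phiy0: "\<phi> (q y0) \<ge> c"
        using uY1[OF y0(1)] v1 y0(3) wy0 unfolding \<phi>_def c_def N_def by simp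
      have phib: "\<bar>\<phi> b\<bar> \<le> c * norm b" for b
        using norm_blinfun[of v1 b] v1(2) n1 c_def \<phi>_def by simp
      have "c \<le> c * norm (q y0)" using phiy0 phib[of "q y0"] by simp
      then have nq1: "norm (q y0) = 1" using nqy cpos by (smt (verit) mult_le_cancel_left1)
      have phic: "\<phi> (q y0) = c" using phiy0 phib[of "q y0"] nq1 by simp
      have qYs: "subspace (q ` Y)"
        using assms(1) assms(6) unfolding realises_quotient_def by (simp add: linear_subspace_image)
      have sdq: "sub_dual (q ` Y) \<phi>" unfolding sub_dual_def \<phi>_def
        using phib \<phi>_def by (auto simp: blinfun.add_right blinfun.scaleR_right)
      have dnq: "dual_norm_on (q ` Y) \<phi> = c"
      proof (rule antisym)
        show "dual_norm_on (q ` Y) \<phi> \<le> c" using dn_le[OF qYs _ c0] phib by blast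
        show "c \<le> dual_norm_on (q ` Y) \<phi>"
          using dn_ge[OF sdq, of "q y0"] y0(1) nq1 phic by simp
      qed
      have "\<exists>!x::'b \<Rightarrow>\<^sub>L real. (\<forall>y\<in>q ` Y. blinfun_apply x y = \<phi> y) \<and> norm x = dual_norm_on (q ` Y) \<phi>"
      proof -
        have "\<exists>y0'\<in>q ` Y. norm y0' = 1 \<and> \<phi> y0' = dual_norm_on (q ` Y) \<phi>"
          using y0(1) nq1 phic dnq by (intro bexI[of _ "q y0"]) auto
        then show ?thesis using assms(8) sdq unfolding property_wU_def by blast
      qed
      moreover have "(\<forall>y\<in>q ` Y. blinfun_apply v1 y = \<phi> y) \<and> norm v1 = dual_norm_on (q ` Y) \<phi>"
        using dnq v1 n1 c_def \<phi>_def by simp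
      moreover have "(\<forall>y\<in>q ` Y. blinfun_apply v2 y = \<phi> y) \<and> norm v2 = dual_norm_on (q ` Y) \<phi>"
        using dnq v2 n2 c_def agree by simp
      ultimately have "v1 = v2" by blast
      then have "u1 = u2" using v1 v2 by (metis blinfun_eqI)
      then show ?thesis using f1eq u2eq by simp
    qed
  qed
  from ext obtain f where f: "\<forall>y\<in>Y. blinfun_apply f y = g y" "norm f \<le> N" by blast
  then have fN: "norm f = N" using normge by (simp add: antisym)
  show "\<exists>!x::'a \<Rightarrow>\<^sub>L real. (\<forall>y\<in>Y. blinfun_apply x y = g y) \<and> norm x = dual_norm_on Y g"
    using f fN uniq unfolding N_def by blast
qed

end
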